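(* Let $(X,V)$ and $(\overline{X},\overline{V})$ be global solutions of the discrete Motsch–Tadmor model (as in the context) whose initial data satisfy \[ \max\{\|\Delta^x(0)\|_F,\|\Delta^{\overline{x}}(0)\|_F\}<M,\quad \|\Delta^v(0)\|_F<\kappa\int_{\|\Delta^x(0)\|_F}^M\psi(s)\,ds,\quad \|\Delta^{\overline{v}}(0)\|_F<\kappa\int_{\|\Delta^{\overline{x}}(0)\|_F}^M\psi(s)\,ds. \] For $i,j\in\{1,\dots,N\}$ and $n\ge0$ let \[ \mathcal{I}_1^{ij}=h\kappa\sum_{l=1}^N(\phi_{il}(n)-\overline{\phi}_{il}(n))\Delta^v_{li}(n)-h\kappa\sum_{l=1}^N(\phi_{jl}(n)-\overline{\phi}_{jl}(n))\Delta^v_{lj}(n). \] Then \[ \sum_{i,j=1}^N\|\mathcal{I}_1^{ij}\|^2\le\frac{16h^2\kappa^2L_a^2M^2}{c_1^2}\Big(1+\frac{c_2}{c_1}\Big)^2\|\Delta^v(n)\|_F^2 . \]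
   Context: Discrete MT model: fix $N\ge1$, $d\ge1$, $\kappa>0$, $h>0$, and $a:[0,\infty)\to\mathbb{R}$ with constants $0<c_1\le c_2$, $c_1\le a\le c_2$, $|a(r_1)-a(r_2)|\le L_a|r_1-r_2|$ ($L_a>0$); $0<h<\min\{1,1/\kappa\}$. A solution satisfies $x_i(n+1)=x_i(n)+hv_i(n)$, $v_i(n+1)=v_i(n)+h\kappa\sum_j\phi_{ij}(n)(v_j(n)-v_i(n))$ with $\phi_{ij}(n)=\frac{a(\|x_i(n)-x_j(n)\|)}{\sum_ka(\|x_i(n)-x_k(n)\|)}$; $\overline{\phi}_{ij}(n)$ is defined likewise from $\overline{X}(n)$. Notation: $\Delta^x_{ij}=x_i-x_j$, $\Delta^v_{ij}=v_i-v_j$, similarly $\Delta^{\overline{x}},\Delta^{\overline{v}}$; $\|A\|_F=(\sum_{i,j}\|A_{ij}\|^2)^{1/2}$. Constants: $\|\phi\|_{\mathrm{Lip}}=\frac{L_a}{Nc_1}(1+\frac{c_2}{c_1})$, $M=\frac{1}{4N\|\phi\|_{\mathrm{Lip}}}$, $\psi(s)=1-\|\phi\|_{\mathrm{Lip}}Ns$. *)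

theory Defs
  imports "HOL-Analysis.Analysis"
begin

text \<open>Agents are indexed by 0..N-1 (nat), positions/velocities live in real^'d.
  A trajectory is a function  nat (time step) => nat (agent) => real^'d.\<close>

definition mt_phi :: "nat \<Rightarrow> (real \<Rightarrow> real) \<Rightarrow> (nat \<Rightarrow> real^'d) \<Rightarrow> nat \<Rightarrow> nat \<Rightarrow> real" where
  "mt_phi N a y i j = a (norm (y i - y j)) / (\<Sum>k<N. a (norm (y i - y k)))"

definition mt_solution ::
  "nat \<Rightarrow> real \<Rightarrow> real \<Rightarrow> (real \<Rightarrow> real) \<Rightarrow> (nat \<Rightarrow> nat \<Rightarrow> real^'d) \<Rightarrow> (nat \<Rightarrow> nat \<Rightarrow> real^'d) \<Rightarrow> bool" where
  "mt_solution N \<kappa> h a X V \<longleftrightarrow>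
     (\<forall>n i. i < N \<longrightarrow>
        X (Suc n) i = X n i + h *\<^sub>R V n i \<and>
        V (Suc n) i = V n i + (h * \<kappa>) *\<^sub>R (\<Sum>j<N. mt_phi N a (X n) i j *\<^sub>R (V n j - V n i)))"

definition frob_diff :: "nat \<Rightarrow> (nat \<Rightarrow> real^'d) \<Rightarrow> real" where
  "frob_diff N w = sqrt (\<Sum>i<N. \<Sum>j<N. (norm (w i - w j))\<^sup>2)"

definition phi_lip :: "nat \<Rightarrow> real \<Rightarrow> real \<Rightarrow> real \<Rightarrow> real" where
  "phi_lip N La c1 c2 = La / (real N * c1) * (1 + c2 / c1)"

definition Mconst :: "nat \<Rightarrow> real \<Rightarrow> real \<Rightarrow> real \<Rightarrow> real" where
  "Mconst N La c1 c2 = 1 / (4 * real N * phi_lip N La c1 c2)"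

definition psi :: "nat \<Rightarrow> real \<Rightarrow> real \<Rightarrow> real \<Rightarrow> real \<Rightarrow> real" where
  "psi N La c1 c2 s = 1 - phi_lip N La c1 c2 * real N * s"

end

theory Submission imports Defs begin

lemma frob_L2: "frob_diff N w = L2_set (\<lambda>p. norm (w (fst p) - w (snd p))) ({..<N} \<times> {..<N})"
  unfolding frob_diff_def L2_set_def by (simp add: sum.cartesian_product case_prod_beta)

lemma frob_ge: "i < N \<Longrightarrow> j < N \<Longrightarrow> norm (w i - w j) \<le> frob_diff N w"
  unfolding frob_L2 by (rule member_le_L2_set[where f="\<lambda>p. norm (w (fst p) - w (snd p))" and i="(i,j)", simplified]) auto

lemma frob_nonneg: "0 \<le> frob_diff N w"
  unfolding frob_diff_def by (simp add: sum_nonneg)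

lemma frob_mono:
  assumes "\<And>i j. i < N \<Longrightarrow> j < N \<Longrightarrow> norm (w i - w j) \<le> \<alpha> * norm (u i - u j) + \<beta> * norm (z i - z j)"
    and "\<alpha> \<ge> 0" "\<beta> \<ge> 0"
  shows "frob_diff N w \<le> \<alpha> * frob_diff N u + \<beta> * frob_diff N z"
proof -
  let ?K = "{..<N} \<times> {..<N}"
  have "frob_diff N w \<le> L2_set (\<lambda>p. \<alpha> * norm (u (fst p) - u (snd p)) + \<beta> * norm (z (fst p) - z (snd p))) ?K"
    unfolding frob_L2 by (rule L2_set_mono) (use assms in auto)
  also have "\<dots> \<le> L2_set (\<lambda>p. \<alpha> * norm (u (fst p) - u (snd p))) ?K + L2_set (\<lambda>p. \<beta> * norm (z (fst p) - z (snd p))) ?K"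
    by (rule L2_set_triangle_ineq)
  also have "\<dots> = \<alpha> * frob_diff N u + \<beta> * frob_diff N z"
    unfolding frob_L2 using assms by (simp add: L2_set_right_distrib)
  finally show ?thesis .
qed

lemma frac_bound:
  fixes a1 a2 S T m e c1 c2 :: real
  assumes m: "m > 0" and S: "S \<ge> m" and T: "T \<ge> m" and a2: "0 \<le> a2" "a2 \<le> c2"
    and e1: "\<bar>a1 - a2\<bar> \<le> e" and e2: "\<bar>S - T\<bar> \<le> n * e" and mdef: "m = n * c1" and c1: "c1 > 0"
  shows "\<bar>a1 / S - a2 / T\<bar> \<le> e / m * (1 + c2 / c1)"
proof -
  have Sp: "S > 0" "T > 0" using m S T by auto
  have eq: "a1 / S - a2 / T = (a1 - a2) / S + a2 * (T - S) / (S * T)"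
    using Sp by (simp add: field_simps)
  have "\<bar>(a1 - a2) / S\<bar> \<le> e / m"
  proof -
    have "\<bar>(a1 - a2) / S\<bar> = \<bar>a1 - a2\<bar> / S" using Sp by simp
    also have "\<dots> \<le> e / S" using Sp e1 by (simp add: divide_right_mono)
    also have "\<dots> \<le> e / m" using m S e1 by (intro divide_left_mono) auto
    finally show ?thesis .
  qed
  moreover have "\<bar>a2 * (T - S) / (S * T)\<bar> \<le> c2 * (n * e) / (m * m)"
  proof -
    have "\<bar>a2 * (T - S) / (S * T)\<bar> = a2 * \<bar>T - S\<bar> / (S * T)" using Sp a2 by (simp add: abs_mult)
    also have "\<dots> \<le> c2 * (n * e) / (S * T)"
      using Sp a2 e2 by (intro divide_right_mono mult_mono) (auto simp: abs_minus_commute)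
    also have "\<dots> \<le> c2 * (n * e) / (m * m)"
    proof (rule divide_left_mono)
      show "0 \<le> c2 * (n * e)" using a2 e2 by (meson abs_ge_zero mult_nonneg_nonneg order_trans)
      show "m * m \<le> S * T" using S T m by (intro mult_mono) auto
      show "0 < S * T * (m * m)" using Sp m by simp
    qed
    finally show ?thesis .
  qed
  ultimately have "\<bar>a1 / S - a2 / T\<bar> \<le> e / m + c2 * (n * e) / (m * m)"
    unfolding eq by (rule order_trans[OF abs_triangle_ineq add_mono])
  also have "\<dots> = e / m * (1 + c2 / c1)" using m c1 mdef by (simp add: field_simps)
  finally show ?thesis .
qed

locale mtc =
  fixes N :: nat and \<kappa> h c1 c2 La :: real and a :: "real \<Rightarrow> real"
  assumes N: "N \<ge> 1" and kappa: "\<kappa> > 0" and hpos: "h > 0" and hk: "h * \<kappa> < 1"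
    and c1: "0 < c1" and c12: "c1 \<le> c2"
    and a_bd: "\<And>r. r \<ge> 0 \<Longrightarrow> c1 \<le> a r \<and> a r \<le> c2"
    and La: "La > 0"
    and a_lip: "\<And>r1 r2. r1 \<ge> 0 \<Longrightarrow> r2 \<ge> 0 \<Longrightarrow> \<bar>a r1 - a r2\<bar> \<le> La * \<bar>r1 - r2\<bar>"
begin

abbreviation "P \<equiv> phi_lip N La c1 c2"

lemma P_pos: "P > 0" using N c1 c12 La unfolding phi_lip_def
  by (intro mult_pos_pos divide_pos_pos) (auto simp: add_pos_nonneg)

lemma S_ge: "real N * c1 \<le> (\<Sum>k<N. a (norm (y i - y k)))"
proof -
  have "(\<Sum>k<N. c1) \<le> (\<Sum>k<N. a (norm (y i - y k)))"
    by (rule sum_mono) (use a_bd in auto)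
  then show ?thesis by simp
qed

lemma Nc1: "real N * c1 > 0" using N c1 by simp

lemma phi_sum: "(\<Sum>l<N. mt_phi N a y i l) = 1"
proof -
  have "(\<Sum>k<N. a (norm (y i - y k))) > 0" using S_ge[of y i] Nc1 by linarith
  then show ?thesis unfolding mt_phi_def by (simp add: sum_divide_distrib[symmetric])
qed

lemma phi_lipschitz:
  assumes "l < N"
  shows "\<bar>mt_phi N a y i l - mt_phi N a y j l\<bar> \<le> P * norm (y i - y j)"
proof -
  let ?e = "La * norm (y i - y j)"
  have ab: "\<bar>a (norm (y i - y k)) - a (norm (y j - y k))\<bar> \<le> ?e" for k
  proof -
    have "\<bar>a (norm (y i - y k)) - a (norm (y j - y k))\<bar> \<le> La * \<bar>norm (y i - y k) - norm (y j - y k)\<bar>"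
      by (rule a_lip) auto
    also have "\<dots> \<le> ?e"
    proof -
      have "\<bar>norm (y i - y k) - norm (y j - y k)\<bar> \<le> norm ((y i - y k) - (y j - y k))"
        by (rule norm_triangle_ineq3)
      then show ?thesis using La by (intro mult_left_mono) auto
    qed
    finally show ?thesis .
  qed
  have sb: "\<bar>(\<Sum>k<N. a (norm (y i - y k))) - (\<Sum>k<N. a (norm (y j - y k)))\<bar> \<le> real N * ?e"
  proof -
    have "\<bar>(\<Sum>k<N. a (norm (y i - y k))) - (\<Sum>k<N. a (norm (y j - y k)))\<bar>
        = \<bar>\<Sum>k<N. a (norm (y i - y k)) - a (norm (y j - y k))\<bar>" by (simp add: sum_subtractf)
    also have "\<dots> \<le> (\<Sum>k<N. \<bar>a (norm (y i - y k)) - a (norm (y j - y k))\<bar>)" by (rule sum_abs)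
    also have "\<dots> \<le> (\<Sum>k<N. ?e)" by (rule sum_mono) (rule ab)
    finally show ?thesis by simp
  qed
  have "\<bar>mt_phi N a y i l - mt_phi N a y j l\<bar> \<le> ?e / (real N * c1) * (1 + c2 / c1)"
    unfolding mt_phi_def
    by (rule frac_bound[OF Nc1 S_ge S_ge _ _ ab sb refl c1]) (use a_bd[of "norm (y j - y l)"] c1 in auto)
  also have "\<dots> = P * norm (y i - y j)" unfolding phi_lip_def by (simp add: field_simps)
  finally show ?thesis .
qed

lemma phi_near:
  assumes D: "\<And>p q. p < N \<Longrightarrow> q < N \<Longrightarrow> norm (y p - y q) \<le> D" and i: "i < N" and l: "l < N"
  shows "\<bar>mt_phi N a y i l - 1 / real N\<bar> \<le> P * D"
proof -
  let ?S = "(\<Sum>k<N. a (norm (y i - y k)))"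
  have D0: "D \<ge> 0" using D[OF i i] by simp
  have Sp: "?S \<ge> real N * c1" by (rule S_ge)
  have Spos: "?S > 0" using Sp Nc1 by linarith
  have ab: "\<bar>a (norm (y i - y l)) - a (norm (y i - y k))\<bar> \<le> La * D" if k: "k < N" for k
  proof -
    have "\<bar>a (norm (y i - y l)) - a (norm (y i - y k))\<bar> \<le> La * \<bar>norm (y i - y l) - norm (y i - y k)\<bar>"
      by (rule a_lip) auto
    also have "\<dots> \<le> La * D"
    proof -
      have "\<bar>norm (y i - y l) - norm (y i - y k)\<bar> \<le> D" unfolding abs_le_iff using D[OF i l] D[OF i k] norm_ge_zero[of "y i - y l"] norm_ge_zero[of "y i - y k"] by linarith
      then show ?thesis using La by (intro mult_left_mono) auto
    qed
    finally show ?thesis .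
  qed
  have Npos: "real N > 0" using N by simp
  have sumeq: "(\<Sum>k<N. a (norm (y i - y l)) - a (norm (y i - y k))) = real N * a (norm (y i - y l)) - ?S"
    by (simp add: sum_subtractf)
  have eq0: "A / S - 1 / n = (n * A - S) / (n * S)" if "S > 0" "n > 0" for A S n :: real
    using that by (simp add: field_simps)
  have eq: "mt_phi N a y i l - 1 / real N = (\<Sum>k<N. a (norm (y i - y l)) - a (norm (y i - y k))) / (real N * ?S)"
    unfolding sumeq mt_phi_def by (rule eq0[OF Spos Npos])
  have "\<bar>\<Sum>k<N. a (norm (y i - y l)) - a (norm (y i - y k))\<bar> \<le> real N * (La * D)"
  proof -
    have "\<bar>\<Sum>k<N. a (norm (y i - y l)) - a (norm (y i - y k))\<bar> \<le> (\<Sum>k<N. \<bar>a (norm (y i - y l)) - a (norm (y i - y k))\<bar>)" by (rule sum_abs)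
    also have "\<dots> \<le> (\<Sum>k<N. La * D)" by (rule sum_mono) (use ab in auto)
    finally show ?thesis by simp
  qed
  moreover have NS: "real N * ?S > 0" using Spos Npos by simp
  ultimately have "\<bar>mt_phi N a y i l - 1 / real N\<bar> \<le> real N * (La * D) / (real N * ?S)"
    unfolding eq abs_divide abs_of_pos[OF NS] by (intro divide_right_mono) auto
  also have "\<dots> \<le> real N * (La * D) / (real N * (real N * c1))"
  proof (rule divide_left_mono)
    show "0 \<le> real N * (La * D)" using Npos La D0 by simp
    show "real N * (real N * c1) \<le> real N * ?S" using Sp Npos by simp
    show "0 < real N * ?S * (real N * (real N * c1))" using NS Npos Nc1 by simp
  qed
  also have "\<dots> = La * D / (real N * c1)" using N by simp
  also have "\<dots> \<le> P * D"
  proof -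
    have "La * D / (real N * c1) = (La / (real N * c1)) * D" by simp
    also have "\<dots> \<le> (La / (real N * c1) * (1 + c2 / c1)) * D"
      using La Nc1 D0 c1 c12 by (intro mult_right_mono) (auto simp: field_simps)
    finally show ?thesis unfolding phi_lip_def .
  qed
  finally show ?thesis .
qed


lemma vel_step:
  assumes sol: "mt_solution N \<kappa> h a X V"
  shows "frob_diff N (V (Suc n)) \<le> (1 - h * \<kappa>) * frob_diff N (V n)
           + (h * \<kappa> * (real N * P * frob_diff N (V n))) * frob_diff N (X n)"
proof (rule frob_mono)
  show "0 \<le> 1 - h * \<kappa>" using hk by simp
  show "0 \<le> h * \<kappa> * (real N * P * frob_diff N (V n))"
    using hpos kappa P_pos frob_nonneg[of N "V n"] by simp
  fix i j assume i: "i < N" and j: "j < N"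
  define v where "v = V n"
  define x where "x = X n"
  have N0: "0 < N" using N by simp
  define S where "S k = (\<Sum>l<N. mt_phi N a x k l *\<^sub>R (v l - v 0))" for k
  have rew: "(\<Sum>l<N. mt_phi N a x k l *\<^sub>R (v l - v k)) = S k - (v k - v 0)" for k
  proof -
    have "(\<Sum>l<N. mt_phi N a x k l *\<^sub>R (v l - v k))
        = (\<Sum>l<N. mt_phi N a x k l *\<^sub>R (v l - v 0) - mt_phi N a x k l *\<^sub>R (v k - v 0))"
      by (rule sum.cong) (auto simp: scaleR_diff_right[symmetric])
    also have "\<dots> = S k - (\<Sum>l<N. mt_phi N a x k l) *\<^sub>R (v k - v 0)"
      unfolding S_def by (simp add: sum_subtractf scaleR_sum_left)
    also have "\<dots> = S k - (v k - v 0)" by (simp add: phi_sum)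
    finally show ?thesis .
  qed
  have Vi: "V (Suc n) k = v k + (h * \<kappa>) *\<^sub>R (S k - (v k - v 0))" if "k < N" for k
    using sol that rew unfolding mt_solution_def v_def x_def by auto
  have diff: "V (Suc n) i - V (Suc n) j = (1 - h * \<kappa>) *\<^sub>R (v i - v j) + (h * \<kappa>) *\<^sub>R (S i - S j)"
    unfolding Vi[OF i] Vi[OF j] by (simp add: algebra_simps)
  have Sdiff: "S i - S j = (\<Sum>l<N. (mt_phi N a x i l - mt_phi N a x j l) *\<^sub>R (v l - v 0))"
    unfolding S_def by (simp add: sum_subtractf scaleR_diff_left)
  have "norm (S i - S j) \<le> (\<Sum>l<N. \<bar>mt_phi N a x i l - mt_phi N a x j l\<bar> * norm (v l - v 0))"
    unfolding Sdiff by (rule order_trans[OF norm_sum]) simp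
  also have "\<dots> \<le> (\<Sum>l<N. (P * norm (x i - x j)) * frob_diff N v)"
  proof (rule sum_mono)
    fix l assume l: "l \<in> {..<N}"
    show "\<bar>mt_phi N a x i l - mt_phi N a x j l\<bar> * norm (v l - v 0) \<le> (P * norm (x i - x j)) * frob_diff N v"
      using l N0 by (intro mult_mono phi_lipschitz frob_ge) (auto intro!: mult_nonneg_nonneg P_pos[THEN less_imp_le])
  qed
  also have "\<dots> = real N * P * frob_diff N v * norm (x i - x j)" by simp
  finally have nS: "norm (S i - S j) \<le> real N * P * frob_diff N v * norm (x i - x j)" .
  have "norm (V (Suc n) i - V (Suc n) j) \<le> norm ((1 - h * \<kappa>) *\<^sub>R (v i - v j)) + norm ((h * \<kappa>) *\<^sub>R (S i - S j))"
    unfolding diff by (rule norm_triangle_ineq)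
  also have "\<dots> = (1 - h * \<kappa>) * norm (v i - v j) + (h * \<kappa>) * norm (S i - S j)"
    using hk hpos kappa by simp
  also have "\<dots> \<le> (1 - h * \<kappa>) * norm (v i - v j) + (h * \<kappa>) * (real N * P * frob_diff N v * norm (x i - x j))"
    using nS hpos kappa by (intro add_left_mono mult_left_mono) auto
  finally show "norm (V (Suc n) i - V (Suc n) j) \<le> (1 - h * \<kappa>) * norm (V n i - V n j)
      + h * \<kappa> * (real N * P * frob_diff N (V n)) * norm (X n i - X n j)"
    unfolding v_def x_def by (simp add: mult.assoc)
qed

lemma pos_step:
  assumes sol: "mt_solution N \<kappa> h a X V"
  shows "frob_diff N (X (Suc n)) \<le> 1 * frob_diff N (X n) + h * frob_diff N (V n)"
proof (rule frob_mono)
  fix i j assume i: "i < N" and j: "j < N"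
  have "X (Suc n) i - X (Suc n) j = (X n i - X n j) + h *\<^sub>R (V n i - V n j)"
    using sol i j unfolding mt_solution_def by (simp add: algebra_simps)
  then show "norm (X (Suc n) i - X (Suc n) j) \<le> 1 * norm (X n i - X n j) + h * norm (V n i - V n j)"
    using hpos norm_triangle_ineq[of "X n i - X n j" "h *\<^sub>R (V n i - V n j)"] by simp
qed (use hpos in auto)

definition q where "q = P * real N"
definition Psi where "Psi r = r - q * r\<^sup>2 / 2"

lemma q_pos: "q > 0" unfolding q_def using P_pos N by simp
lemma M_eq: "Mconst N La c1 c2 = 1 / (4 * q)" unfolding Mconst_def q_def by (simp add: mult_ac)
lemma psi_eq: "psi N La c1 c2 s = 1 - q * s" unfolding psi_def q_def by simp

lemma integral_psi:
  assumes "x0 \<le> M"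
  shows "integral {x0..M} (psi N La c1 c2) = Psi M - Psi x0"
proof -
  have "((\<lambda>s. 1 - q * s) has_integral Psi M - Psi x0) {x0..M}"
  proof (rule fundamental_theorem_of_calculus[OF assms])
    fix s assume "s \<in> {x0..M}"
    show "(Psi has_vector_derivative 1 - q * s) (at s within {x0..M})"
      unfolding Psi_def has_real_derivative_iff_has_vector_derivative[symmetric]
      by (auto intro!: derivative_eq_intros simp: power2_eq_square)
  qed
  then show ?thesis unfolding psi_eq by (rule integral_unique)
qed


lemma qM: "q * Mconst N La c1 c2 = 1/4" unfolding M_eq using q_pos by simp

lemma invariant:
  assumes sol: "mt_solution N \<kappa> h a X V"
    and x0: "frob_diff N (X 0) < Mconst N La c1 c2"
    and v0: "frob_diff N (V 0) < \<kappa> * integral {frob_diff N (X 0)..Mconst N La c1 c2} (psi N La c1 c2)"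
  shows "frob_diff N (X n) < Mconst N La c1 c2 \<and>
         frob_diff N (V n) + \<kappa> * Psi (frob_diff N (X n)) < \<kappa> * Psi (Mconst N La c1 c2)"
proof (induction n)
  case 0
  then show ?case using x0 v0 integral_psi[of "frob_diff N (X 0)" "Mconst N La c1 c2"]
    by (simp add: algebra_simps)
next
  case (Suc n)
  define M where "M = Mconst N La c1 c2"
  define x where "x = frob_diff N (X n)"
  define v where "v = frob_diff N (V n)"
  define x' where "x' = frob_diff N (X (Suc n))"
  define v' where "v' = frob_diff N (V (Suc n))"
  have H1: "0 \<le> x" "x < M" using Suc frob_nonneg unfolding x_def M_def by auto
  have H2: "0 \<le> v" "0 \<le> v'" "0 \<le> x'" unfolding v_def v'_def x'_def by (auto simp: frob_nonneg)
  have H3: "v + \<kappa> * Psi x < \<kappa> * Psi M" using Suc unfolding x_def v_def M_def by auto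
  have H4: "v' \<le> (1 - h * \<kappa>) * v + (h * \<kappa> * (q * v)) * x"
    using vel_step[OF sol, of n] unfolding v_def v'_def x_def q_def by (simp add: mult_ac)
  have H5: "x' \<le> x + h * v" using pos_step[OF sol, of n] unfolding v_def x'_def x_def by simp
  have qM': "q * M = 1/4" unfolding M_def by (rule qM)
  have qp: "q > 0" by (rule q_pos)
  have Mp: "M > 0" using H1 by simp
  have qx: "q * x \<le> 1/4" using qM' H1 qp by (metis less_imp_le mult_left_mono)
  have F0: "Psi x' - Psi x - (1 - q * x) * (x' - x) = - (q * (x' - x)\<^sup>2 / 2)"
    unfolding Psi_def by (simp add: power2_eq_square field_simps)
  have F0': "q * (x' - x)\<^sup>2 / 2 \<ge> 0" using qp by simp
  have F1a: "(1 - q * x) * (x' - x) \<le> (1 - q * x) * (h * v)"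
    using qx H5 by (intro mult_left_mono) auto
  have F1: "\<kappa> * Psi x' \<le> \<kappa> * Psi x + \<kappa> * ((1 - q * x) * (h * v))"
  proof -
    have "Psi x' \<le> Psi x + (1 - q * x) * (h * v)" using F0 F0' F1a by linarith
    then show ?thesis using kappa by (simp add: distrib_left[symmetric])
  qed
  have F2: "v' \<le> v - \<kappa> * ((1 - q * x) * (h * v))"
    using H4 by (simp add: algebra_simps)
  have G1: "v' + \<kappa> * Psi x' < \<kappa> * Psi M" using F1 F2 H3 by linarith
  have PsiM: "Psi M = 7/8 * M" unfolding Psi_def using qM' by (simp add: power2_eq_square algebra_simps)
  have Psix: "Psi x \<ge> 0"
  proof -
    have "Psi x = x * (1 - q * x / 2)" unfolding Psi_def by (simp add: power2_eq_square algebra_simps)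
    then show ?thesis using H1 qx by simp
  qed
  have "v < \<kappa> * Psi M" using H3 Psix kappa by (smt (verit) mult_nonneg_nonneg)
  then have "h * v \<le> h * \<kappa> * Psi M" using hpos by (simp add: mult.assoc)
  also have "\<dots> \<le> Psi M" using hk hpos kappa PsiM Mp by (simp add: mult_le_cancel_right1)
  finally have hv: "h * v \<le> 7/8 * M" using PsiM by simp
  have x'2: "x' < 2 * M" using H5 hv H1 by linarith
  have Px': "Psi x' < Psi M"
  proof -
    have "\<kappa> * Psi x' < \<kappa> * Psi M" using G1 H2 by linarith
    then show ?thesis using kappa by simp
  qed
  have G2: "x' < M"
  proof (rule ccontr)
    assume "\<not> x' < M"
    then have a1: "M - x' \<le> 0" by simp
    have a2: "1 - q * (M + x') / 2 \<ge> 0"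
    proof -
      have "q * x' \<le> q * (2 * M)" using x'2 qp by simp
      then show ?thesis using qM' by (simp add: algebra_simps)
    qed
    have "Psi M - Psi x' = (M - x') * (1 - q * (M + x') / 2)"
      unfolding Psi_def by (simp add: power2_eq_square field_simps)
    also have "\<dots> \<le> 0" using a1 a2 by (simp add: mult_nonpos_nonneg)
    finally show False using Px' by simp
  qed
  show ?case using G1 G2 unfolding M_def x'_def v'_def by simp
qed


lemma sq_diff_le: "(norm (u - w))\<^sup>2 \<le> 2 * (norm u)\<^sup>2 + 2 * (norm (w::'b::real_normed_vector))\<^sup>2"
proof -
  have "norm (u - w) \<le> norm u + norm w" by (rule norm_triangle_ineq4)
  then have "(norm (u - w))\<^sup>2 \<le> (norm u + norm w)\<^sup>2" by (simp add: power_mono)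
  also have "\<dots> \<le> 2 * (norm u)\<^sup>2 + 2 * (norm w)\<^sup>2"
    using sum_squares_ge_zero[of "norm u - norm w" 0] by (simp add: power2_eq_square algebra_simps)
  finally show ?thesis .
qed

lemma I1_bound:
  assumes bx: "frob_diff N (X n) < Mconst N La c1 c2" "frob_diff N (Xb n) < Mconst N La c1 c2"
  shows "(\<Sum>i<N. \<Sum>j<N. (norm (
            (h * \<kappa>) *\<^sub>R (\<Sum>l<N. (mt_phi N a (X n) i l - mt_phi N a (Xb n) i l) *\<^sub>R (V n l - V n i))
          - (h * \<kappa>) *\<^sub>R (\<Sum>l<N. (mt_phi N a (X n) j l - mt_phi N a (Xb n) j l) *\<^sub>R (V n l - V n j))))\<^sup>2)
     \<le> (h * \<kappa>)\<^sup>2 * (frob_diff N (V n))\<^sup>2"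
proof -
  define v where "v = V n"
  define d where "d i l = mt_phi N a (X n) i l - mt_phi N a (Xb n) i l" for i l
  define A where "A i = (\<Sum>l<N. d i l *\<^sub>R (v l - v i))" for i
  define s where "s i = (\<Sum>l<N. (norm (v l - v i))\<^sup>2)" for i
  have Npos: "real N > 0" using N by simp
  have PM: "P * Mconst N La c1 c2 = 1 / (4 * real N)"
    unfolding Mconst_def using P_pos Npos by (simp add: field_simps)
  have dbound: "\<bar>d i l\<bar> \<le> 1 / (2 * real N)" if i: "i < N" and l: "l < N" for i l
  proof -
    have e1: "\<bar>mt_phi N a (X n) i l - 1 / real N\<bar> \<le> P * frob_diff N (X n)"
      by (rule phi_near[OF frob_ge i l])
    have e2: "\<bar>mt_phi N a (Xb n) i l - 1 / real N\<bar> \<le> P * frob_diff N (Xb n)"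
      by (rule phi_near[OF frob_ge i l])
    have "P * frob_diff N (X n) \<le> P * Mconst N La c1 c2" "P * frob_diff N (Xb n) \<le> P * Mconst N La c1 c2"
      using bx P_pos by auto
    then have "\<bar>d i l\<bar> \<le> 2 * (1 / (4 * real N))" using e1 e2 PM unfolding d_def by linarith
    then show ?thesis by simp
  qed
  have Asq: "(norm (A i))\<^sup>2 \<le> s i / (4 * real N)" if i: "i < N" for i
  proof -
    have "norm (A i) \<le> (\<Sum>l<N. \<bar>d i l\<bar> * norm (v l - v i))"
      unfolding A_def by (rule order_trans[OF norm_sum]) simp
    also have "\<dots> \<le> (\<Sum>l<N. 1 / (2 * real N) * norm (v l - v i))"
    proof (rule sum_mono)
      fix l assume "l \<in> {..<N}"
      then show "\<bar>d i l\<bar> * norm (v l - v i) \<le> 1 / (2 * real N) * norm (v l - v i)"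
        using dbound[OF i, of l] by (intro mult_right_mono) auto
    qed
    also have "\<dots> = 1 / (2 * real N) * (\<Sum>l<N. norm (v l - v i) * 1)" by (simp add: sum_distrib_left)
    finally have n1: "norm (A i) \<le> 1 / (2 * real N) * (\<Sum>l<N. norm (v l - v i) * 1)" .
    have "(norm (A i))\<^sup>2 \<le> (1 / (2 * real N) * (\<Sum>l<N. norm (v l - v i) * 1))\<^sup>2"
      using n1 by (simp add: power_mono)
    also have "\<dots> = (1 / (2 * real N))\<^sup>2 * (\<Sum>l<N. norm (v l - v i) * 1)\<^sup>2" by (rule power_mult_distrib)
    also have "\<dots> \<le> (1 / (2 * real N))\<^sup>2 * (s i * real N)"
    proof (rule mult_left_mono)
      have "(\<Sum>l<N. norm (v l - v i) * 1)\<^sup>2 \<le> (\<Sum>l<N. (norm (v l - v i))\<^sup>2) * (\<Sum>l<N. (1::real)\<^sup>2)"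
        by (rule Cauchy_Schwarz_ineq_sum)
      then show "(\<Sum>l<N. norm (v l - v i) * 1)\<^sup>2 \<le> s i * real N" unfolding s_def by simp
    qed simp
    also have "\<dots> = s i / (4 * real N)" using Npos by (simp add: power2_eq_square field_simps)
    finally show ?thesis .
  qed
  have E: "(\<Sum>i<N. \<Sum>j<N. (norm ((h * \<kappa>) *\<^sub>R A i - (h * \<kappa>) *\<^sub>R A j))\<^sup>2)
      = (h * \<kappa>)\<^sup>2 * (\<Sum>i<N. \<Sum>j<N. (norm (A i - A j))\<^sup>2)"
    by (simp add: scaleR_diff_right[symmetric] power_mult_distrib sum_distrib_left)
  have "(\<Sum>i<N. \<Sum>j<N. (norm (A i - A j))\<^sup>2) \<le> (\<Sum>i<N. \<Sum>j<N. 2 * (norm (A i))\<^sup>2 + 2 * (norm (A j))\<^sup>2)"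
    by (intro sum_mono sq_diff_le)
  also have "\<dots> = 4 * real N * (\<Sum>i<N. (norm (A i))\<^sup>2)"
    by (simp add: sum.distrib sum_distrib_left[symmetric] sum.swap[of _ "{..<N}" "{..<N}"] algebra_simps)
  also have "\<dots> \<le> 4 * real N * (\<Sum>i<N. s i / (4 * real N))"
    using Npos by (intro mult_left_mono sum_mono Asq) auto
  also have "\<dots> = (\<Sum>i<N. s i)" using Npos by (simp add: sum_distrib_left)
  also have "\<dots> = (frob_diff N v)\<^sup>2"
    unfolding frob_diff_def s_def by (simp add: sum_nonneg norm_minus_commute)
  finally have "(\<Sum>i<N. \<Sum>j<N. (norm (A i - A j))\<^sup>2) \<le> (frob_diff N v)\<^sup>2" .
  then have "(\<Sum>i<N. \<Sum>j<N. (norm ((h * \<kappa>) *\<^sub>R A i - (h * \<kappa>) *\<^sub>R A j))\<^sup>2) \<le> (h * \<kappa>)\<^sup>2 * (frob_diff N v)\<^sup>2"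
    unfolding E by (rule mult_left_mono) simp
  then show ?thesis unfolding A_def d_def v_def .
qed

end

theorem lemma4p4:
  fixes N :: nat and \<kappa> h c1 c2 La :: real and a :: "real \<Rightarrow> real"
    and X V Xb Vb :: "nat \<Rightarrow> nat \<Rightarrow> real^'d"
  assumes N: "N \<ge> 1"
    and kappa: "\<kappa> > 0" and hpos: "h > 0" and hsmall: "h < min 1 (1 / \<kappa>)"
    and c1: "0 < c1" and c12: "c1 \<le> c2"
    and a_bd: "\<And>r. r \<ge> 0 \<Longrightarrow> c1 \<le> a r \<and> a r \<le> c2"
    and La: "La > 0"
    and a_lip: "\<And>r1 r2. r1 \<ge> 0 \<Longrightarrow> r2 \<ge> 0 \<Longrightarrow> \<bar>a r1 - a r2\<bar> \<le> La * \<bar>r1 - r2\<bar>"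
    and sol: "mt_solution N \<kappa> h a X V"
    and solb: "mt_solution N \<kappa> h a Xb Vb"
    and init_x: "max (frob_diff N (X 0)) (frob_diff N (Xb 0)) < Mconst N La c1 c2"
    and init_v: "frob_diff N (V 0) <
        \<kappa> * integral {frob_diff N (X 0)..Mconst N La c1 c2} (psi N La c1 c2)"
    and init_vb: "frob_diff N (Vb 0) <
        \<kappa> * integral {frob_diff N (Xb 0)..Mconst N La c1 c2} (psi N La c1 c2)"
  shows "(\<Sum>i<N. \<Sum>j<N. (norm (
            (h * \<kappa>) *\<^sub>R (\<Sum>l<N. (mt_phi N a (X n) i l - mt_phi N a (Xb n) i l) *\<^sub>R (V n l - V n i))
          - (h * \<kappa>) *\<^sub>R (\<Sum>l<N. (mt_phi N a (X n) j l - mt_phi N a (Xb n) j l) *\<^sub>R (V n l - V n j))))\<^sup>2)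
     \<le> 16 * h\<^sup>2 * \<kappa>\<^sup>2 * La\<^sup>2 * (Mconst N La c1 c2)\<^sup>2 / c1\<^sup>2 * (1 + c2 / c1)\<^sup>2 * (frob_diff N (V n))\<^sup>2"
proof -
  have hk: "h * \<kappa> < 1"
  proof -
    have "h < 1 / \<kappa>" using hsmall by simp
    then show ?thesis using kappa by (simp add: field_simps)
  qed
  interpret mtc N \<kappa> h c1 c2 La a
    by unfold_locales (use N kappa hpos hk c1 c12 a_bd La a_lip in auto)
  have bx: "frob_diff N (X n) < Mconst N La c1 c2"
    using invariant[OF sol _ init_v] init_x by auto
  have bxb: "frob_diff N (Xb n) < Mconst N La c1 c2"
    using invariant[OF solb _ init_vb] init_x by auto
  have Npos: "real N > 0" using N by simp
  have C: "16 * h\<^sup>2 * \<kappa>\<^sup>2 * La\<^sup>2 * (Mconst N La c1 c2)\<^sup>2 / c1\<^sup>2 * (1 + c2 / c1)\<^sup>2 = (h * \<kappa>)\<^sup>2"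
  proof -
    have e1: "La / c1 * (1 + c2 / c1) = real N * P" unfolding phi_lip_def using Npos c1 by (simp add: field_simps)
    have e2: "4 * (real N * P) * Mconst N La c1 c2 = 1" unfolding Mconst_def using Npos P_pos by (simp add: field_simps)
    have "16 * h\<^sup>2 * \<kappa>\<^sup>2 * La\<^sup>2 * (Mconst N La c1 c2)\<^sup>2 / c1\<^sup>2 * (1 + c2 / c1)\<^sup>2
        = (h * \<kappa>)\<^sup>2 * (4 * (La / c1 * (1 + c2 / c1)) * Mconst N La c1 c2)\<^sup>2"
      by (simp add: power2_eq_square field_simps)
    also have "\<dots> = (h * \<kappa>)\<^sup>2" unfolding e1 e2 by simp
    finally show ?thesis .
  qed
  show ?thesis unfolding C by (rule I1_bound[of X n Xb V, OF bx bxb])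
qed

end
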